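(* Let $\alpha\ge\tfrac12$. Define $g_1=\frac1{\omega_1}\mathbf{1}_{[0,1)}*_\alpha\mathbf{1}_{[0,2]}$ and, for $n\ge2$, $g_n=\frac1{\omega_1}\mathbf{1}_{[0,1)}*_\alpha\mathbf{1}_{[n-2,n+1]}$. Then for every $n\ge1$, $g_n(x)=1$ for all $x\in[n-1,n)$.
   Context: Fix $\alpha\geq\tfrac12$. The Bessel–Kingman hypergroup is $(\mathbb{R}_+,*_\alpha)$ with Haar measure $\omega_\alpha(dz)=z^{2\alpha+1}dz$ and, for $x,y>0$, $\varepsilon_x*_\alpha\varepsilon_y(f)=\int_{|x-y|}^{x+y}K_\alpha(x,y,z)f(z)z^{2\alpha+1}dz$ with $K_\alpha(x,y,z)=C_\Gamma\frac{[(z^2-(x-y)^2)((x+y)^2-z^2)]^{\alpha-1/2}}{(xyz)^{2\alpha}}$, $C_\Gamma=\frac{\Gamma(\alpha+1)}{\Gamma(1/2)\Gamma(\alpha+1/2)2^{2\alpha-1}}$; $\varepsilon_0$ is the identity; $\varepsilon_x*_\alpha\varepsilon_y$ is a probability measure. Translation: $\tau_xf(y)=\varepsilon_x*_\alpha\varepsilon_y(f)$; convolution of functions: $f_1*_\alpha f_2(x)=\int_{\mathbb{R}_+}f_1(y)\,\tau_xf_2(y)\,d\omega_\alpha(y)$. $\omega_1=\omega_\alpha([0,1))$. *)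

theory Defs
  imports "HOL-Analysis.Analysis"
begin

text \<open>Bessel--Kingman hypergroup on R_+ = {0..} with parameter alpha.
  Functions are represented as real-valued functions on the reals; only their values on {0..} matter.\<close>

definition BK_const :: "real \<Rightarrow> real" where
  "BK_const \<alpha> = Gamma (\<alpha> + 1) / (Gamma (1/2) * Gamma (\<alpha> + 1/2) * 2 powr (2*\<alpha> - 1))"

definition BK_kernel :: "real \<Rightarrow> real \<Rightarrow> real \<Rightarrow> real \<Rightarrow> real" where
  "BK_kernel \<alpha> x y z =
     BK_const \<alpha> * ((z\<^sup>2 - (x - y)\<^sup>2) * ((x + y)\<^sup>2 - z\<^sup>2)) powr (\<alpha> - 1/2) / (x * y * z) powr (2*\<alpha>)"

text \<open>Generalized translation: tau_x f (y) = (eps_x * eps_y)(f); eps_0 is the identity.\<close>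
definition BK_transl :: "real \<Rightarrow> real \<Rightarrow> (real \<Rightarrow> real) \<Rightarrow> real \<Rightarrow> real" where
  "BK_transl \<alpha> x f y =
     (if x = 0 then f y
      else if y = 0 then f x
      else set_lebesgue_integral lborel {\<bar>x - y\<bar>..x + y}
             (\<lambda>z. BK_kernel \<alpha> x y z * f z * z powr (2*\<alpha> + 1)))"

text \<open>Convolution of functions w.r.t. Haar measure omega_alpha(dz) = z^(2 alpha+1) dz on R_+.\<close>
definition BK_conv :: "real \<Rightarrow> (real \<Rightarrow> real) \<Rightarrow> (real \<Rightarrow> real) \<Rightarrow> real \<Rightarrow> real" where
  "BK_conv \<alpha> f1 f2 x =
     set_lebesgue_integral lborel {0..} (\<lambda>y. f1 y * BK_transl \<alpha> x f2 y * y powr (2*\<alpha> + 1))"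

definition BK_omega1 :: "real \<Rightarrow> real" where
  "BK_omega1 \<alpha> = set_lebesgue_integral lborel {0..<1} (\<lambda>y. y powr (2*\<alpha> + 1))"

definition BK_g :: "real \<Rightarrow> nat \<Rightarrow> real \<Rightarrow> real" where
  "BK_g \<alpha> n =
     BK_conv \<alpha> (\<lambda>y. indicator {0..<1} y / BK_omega1 \<alpha>)
       (if n = 1 then indicator {0..2} else indicator {real n - 2..real n + 1})"

end

theory Submission imports Defs begin
lemma gamma_dup_real:
  fixes a :: real assumes "a > 0"
  shows "Gamma a * Gamma (a + 1/2) = 2 powr (1 - 2*a) * sqrt pi * Gamma (2*a)"
proof -
  have nz1: "complex_of_real a \<notin> \<int>\<^sub>\<le>\<^sub>0"
    using assms nonpos_Ints_nonpos[of a] by (simp only: of_real_in_nonpos_Ints_iff) linarith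
  have h1: "complex_of_real a + 1/2 = complex_of_real (a + 1/2)" by simp
  have h2: "2 * complex_of_real a = complex_of_real (2*a)" by simp
  have h3: "(1 - complex_of_real (2*a)) * of_real (ln 2) = complex_of_real ((1-2*a) * ln 2)" by simp
  have nz2: "complex_of_real a + 1/2 \<notin> \<int>\<^sub>\<le>\<^sub>0"
    unfolding h1 using assms nonpos_Ints_nonpos[of "a+1/2"] by (simp only: of_real_in_nonpos_Ints_iff) linarith
  have "Gamma (complex_of_real a) * Gamma (complex_of_real a + 1/2) =
        exp ((1 - 2*complex_of_real a) * of_real (ln 2)) * of_real (sqrt pi) * Gamma (2*complex_of_real a)"
    by (rule Gamma_legendre_duplication[OF nz1 nz2])
  hence "complex_of_real (Gamma a) * complex_of_real (Gamma (a+1/2)) =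
        complex_of_real (exp ((1-2*a) * ln 2)) * of_real (sqrt pi) * complex_of_real (Gamma (2*a))"
    unfolding h1 h2 h3 Gamma_complex_of_real exp_of_real .
  hence "complex_of_real (Gamma a * Gamma (a + 1/2)) = complex_of_real (exp ((1-2*a) * ln 2) * sqrt pi * Gamma (2*a))"
    by simp
  hence "Gamma a * Gamma (a + 1/2) = exp ((1-2*a) * ln 2) * sqrt pi * Gamma (2*a)"
    by (simp only: of_real_eq_iff)
  thus ?thesis by (simp add: powr_def)
qed
lemma const_one:
  fixes \<alpha> :: real assumes "\<alpha> \<ge> 1/2"
  shows "BK_const \<alpha> * 4 powr (2*\<alpha>) / 2 * Beta (\<alpha>+1/2) (\<alpha>+1/2) = 1"
proof -
  have d: "Gamma (\<alpha>+1/2) * Gamma (\<alpha>+1) = 2 powr (-2*\<alpha>) * sqrt pi * Gamma (2*\<alpha>+1)"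
    using gamma_dup_real[of "\<alpha>+1/2"] assms by (simp add: algebra_simps)
  define p where "p = 2 powr (2*\<alpha>)"
  have p0: "p > 0" by (simp add: p_def)
  have e1: "2 powr (-2*\<alpha>) = 1/p" by (simp add: p_def powr_minus divide_inverse)
  have e2: "2 powr (2*\<alpha> - 1) = p/2" by (simp add: p_def powr_diff)
  have e3: "(4::real) powr (2*\<alpha>) = p*p"
  proof -
    have "(4::real) powr (2*\<alpha>) = (2*2) powr (2*\<alpha>)" by simp
    also have "\<dots> = p*p" unfolding p_def using powr_mult[of 2 2 "2*\<alpha>"] by simp
    finally show ?thesis .
  qed
  have g1: "Gamma (\<alpha>+1/2) > 0" "Gamma (\<alpha>+1) > 0" "Gamma (2*\<alpha>+1) > 0" using assms by auto
  have sp: "sqrt pi > 0" by simp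
  have ab: "\<alpha> + 1/2 + (\<alpha> + 1/2) = 2*\<alpha>+1" by simp
  obtain A B G where AB: "A = Gamma (\<alpha>+1/2)" "B = Gamma (\<alpha>+1)" "G = Gamma (2*\<alpha>+1)" by blast
  have "BK_const \<alpha> * 4 powr (2*\<alpha>) / 2 * Beta (\<alpha>+1/2) (\<alpha>+1/2)
     = B / (sqrt pi * A * (p/2)) * (p*p) / 2 * (A * A / G)"
    unfolding BK_const_def Beta_def e2 e3 Gamma_one_half_real ab AB by simp
  also have "\<dots> = (A*B) * p / (sqrt pi * G)"
    using g1 p0 sp unfolding AB[symmetric] by (simp add: field_simps)
  also have "\<dots> = 1" unfolding AB d e1 using g1 p0 sp by (simp add: field_simps)
  finally show ?thesis .
qed


lemma alg1:
  fixes X W A B C Q z F :: real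
  assumes "X = A*B" "W = B*z" "F = z*Q" "B>0" "A>0"
  shows "C*Q/X*W = C/A*F"
  using assms by (simp add: field_simps)

lemma kernel_has_integral:
  fixes \<alpha> x y :: real
  assumes al: "\<alpha> \<ge> 1/2" and x: "x > 0" and y: "y > 0"
  shows "((\<lambda>z. BK_kernel \<alpha> x y z * z powr (2*\<alpha> + 1)) has_integral 1) {\<bar>x - y\<bar>..x + y}"
proof -
  define a where "a = \<bar>x - y\<bar>"
  define b where "b = x + y"
  define D where "D = 4*x*y"
  define \<beta> where "\<beta> = \<alpha> - 1/2"
  define P where "P = (\<lambda>z::real. (z\<^sup>2 - (x - y)\<^sup>2) * ((x + y)\<^sup>2 - z\<^sup>2))"
  define fz where "fz = (\<lambda>z. z * (if \<beta> = 0 then 1 else P z powr \<beta>))"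
  define g where "g = (\<lambda>t::real. sqrt (a\<^sup>2 + D * t))"
  define g' where "g' = (\<lambda>t::real. D / (2 * sqrt (a\<^sup>2 + D * t)))"
  have a0: "a \<ge> 0" by (simp add: a_def)
  have ab: "a < b" using x y by (simp add: a_def b_def)
  have D0: "D > 0" using x y by (simp add: D_def)
  have b0: "b > 0" using x y by (simp add: b_def)
  have aa: "a\<^sup>2 = (x-y)\<^sup>2" by (simp add: a_def)
  have bD: "b\<^sup>2 = a\<^sup>2 + D" by (simp add: a_def b_def D_def power2_eq_square algebra_simps)
  have be0: "\<beta> \<ge> 0" using al by (simp add: \<beta>_def)
  have Pnn: "P z \<ge> 0" if "z \<in> {a..b}" for z
  proof -
    from that a0 have "a\<^sup>2 \<le> z\<^sup>2" "z\<^sup>2 \<le> b\<^sup>2" by (auto intro: power_mono)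
    thus ?thesis unfolding P_def using aa by (simp add: b_def)
  qed
  have contf: "continuous_on {a..b} fz"
  proof (cases "\<beta> = 0")
    case True thus ?thesis unfolding fz_def by (simp add: continuous_on_id)
  next
    case False
    hence "\<beta> > 0" using be0 by simp
    have "continuous_on {a..b} (\<lambda>z. P z powr \<beta>)"
      by (rule continuous_on_powr') (use Pnn \<open>\<beta> > 0\<close> in \<open>auto simp: P_def intro!: continuous_intros\<close>)
    thus ?thesis unfolding fz_def using False by (auto intro!: continuous_intros)
  qed
  have g0: "g 0 = a" using a0 by (simp add: g_def)
  have g1: "g 1 = b" using b0 by (simp add: g_def bD[symmetric])
  have gsub: "g ` {0..1} \<subseteq> {a..b}"
  proof
    fix u assume "u \<in> g ` {0..1}"
    then obtain t where t: "t \<in> {0..1}" "u = g t" by auto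
    have "sqrt (a\<^sup>2) \<le> sqrt (a\<^sup>2 + D*t)" using t D0 by (intro real_sqrt_le_mono) simp
    moreover have "sqrt (a\<^sup>2 + D*t) \<le> sqrt (b\<^sup>2)" using t D0 bD
      by (intro real_sqrt_le_mono) (simp add: mult_left_le)
    ultimately show "u \<in> {a..b}" using t a0 b0 by (simp add: g_def)
  qed
  have gcont: "continuous_on {0..1} g" unfolding g_def by (intro continuous_intros)
  have gder: "(g has_field_derivative g' t) (at t within {0..1})" if "t \<in> {0..1} - {0,1}" for t
  proof -
    have "a\<^sup>2 + D*t > 0" using that D0 by (simp add: add_nonneg_pos)
    thus ?thesis unfolding g_def g'_def
      by (auto intro!: derivative_eq_intros simp: field_simps)
  qed
  have sub: "((\<lambda>t. g' t *\<^sub>R fz (g t)) has_integral (integral {g 0..g 1} fz - integral {g 1..g 0} fz)) {0..1}"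
    by (rule has_integral_substitution_general[of "{0,1}"]) (use gsub contf gcont gder in auto)
  have "integral {g 1..g 0} fz = 0" unfolding g0 g1 using ab by simp
  hence sub2: "((\<lambda>t. g' t * fz (g t)) has_integral integral {a..b} fz) {0..1}"
    using sub unfolding g0 g1 by simp
  define c where "c = D / 2 * D powr (2*\<beta>)"
  have Bet: "((\<lambda>t. t powr (\<alpha>+1/2 - 1) * (1 - t) powr (\<alpha>+1/2 - 1)) has_integral Beta (\<alpha>+1/2) (\<alpha>+1/2)) {0..1}"
    by (rule has_integral_Beta_real) (use al in auto)
  have Bet2: "((\<lambda>t. c * (t powr (\<alpha>+1/2 - 1) * (1 - t) powr (\<alpha>+1/2 - 1))) has_integral c * Beta (\<alpha>+1/2) (\<alpha>+1/2)) {0..1}"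
    by (rule has_integral_mult_right[OF Bet])
  have eqt: "g' t * fz (g t) = c * (t powr (\<alpha>+1/2 - 1) * (1 - t) powr (\<alpha>+1/2 - 1))"
    if "t \<in> {0..1} - {0,1}" for t
  proof -
    have t: "0 < t" "t < 1" using that by auto
    have s0: "a\<^sup>2 + D*t > 0" using t D0 by (simp add: add_nonneg_pos)
    have gg: "(g t)\<^sup>2 = a\<^sup>2 + D*t" using s0 by (simp add: g_def)
    have gpos: "g t > 0" using s0 by (simp add: g_def)
    have Pg: "P (g t) = (D*D) * (t * (1-t))"
      unfolding P_def gg aa[symmetric] using bD by (simp add: b_def[symmetric] algebra_simps)
    have "g' t * g t = D/2" using gpos unfolding g'_def g_def by (simp add: field_simps)
    moreover have "(if \<beta> = 0 then 1 else P (g t) powr \<beta>) = D powr (2*\<beta>) * (t powr \<beta> * (1-t) powr \<beta>)"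
    proof (cases "\<beta> = 0")
      case True thus ?thesis using t D0 by simp
    next
      case False
      have q1: "(D*D) powr \<beta> = D powr (2*\<beta>)"
      proof -
        have "(D*D) powr \<beta> = D powr \<beta> * D powr \<beta>" using D0 by (simp add: powr_mult)
        also have "\<dots> = D powr (\<beta> + \<beta>)" by (rule powr_add[symmetric])
        finally show ?thesis by (simp only: mult_2)
      qed
      have q2: "(t * (1-t)) powr \<beta> = t powr \<beta> * (1-t) powr \<beta>" using t by (simp add: powr_mult)
      have "P (g t) powr \<beta> = (D*D) powr \<beta> * (t * (1-t)) powr \<beta>"
        unfolding Pg using t D0 by (intro powr_mult; simp)
      hence "P (g t) powr \<beta> = D powr (2*\<beta>) * (t powr \<beta> * (1-t) powr \<beta>)" unfolding q1 q2 .
      thus ?thesis using False by simp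
    qed
    moreover have e: "\<alpha> + 1/2 - 1 = \<beta>" by (simp add: \<beta>_def)
    moreover have "g' t * fz (g t) = (g' t * g t) * (if \<beta> = 0 then 1 else P (g t) powr \<beta>)"
      by (simp add: fz_def)
    ultimately show ?thesis unfolding c_def by (simp only: mult.assoc)
  qed
  have sub3: "((\<lambda>t. g' t * fz (g t)) has_integral c * Beta (\<alpha>+1/2) (\<alpha>+1/2)) {0..1}"
    by (rule has_integral_spike_finite[OF _ _ Bet2, of "{0,1}"]) (use eqt in auto)
  have intf: "integral {a..b} fz = c * Beta (\<alpha>+1/2) (\<alpha>+1/2)"
    using has_integral_unique[OF sub2 sub3] .
  have fzI: "(fz has_integral c * Beta (\<alpha>+1/2) (\<alpha>+1/2)) {a..b}"
    using integrable_continuous_interval[OF contf] intf by (simp add: has_integral_integral)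
  define K where "K = BK_const \<alpha> / (x*y) powr (2*\<alpha>)"
  have KI: "((\<lambda>z. K * fz z) has_integral K * (c * Beta (\<alpha>+1/2) (\<alpha>+1/2))) {a..b}"
    by (rule has_integral_mult_right[OF fzI])
  have eqz: "BK_kernel \<alpha> x y z * z powr (2*\<alpha> + 1) = K * fz z" if "z \<in> {a..b} - {a,b}" for z
  proof -
    have z: "a < z" "z < b" using that by auto
    hence zp: "z > 0" using a0 by simp
    have "a\<^sup>2 < z\<^sup>2" "z\<^sup>2 < b\<^sup>2" using z a0 by (auto intro: power_strict_mono)
    hence Pp: "P z > 0" unfolding P_def using aa by (simp add: b_def)
    have k: "BK_kernel \<alpha> x y z = BK_const \<alpha> * P z powr \<beta> / (x*y*z) powr (2*\<alpha>)"
      unfolding BK_kernel_def P_def \<beta>_def ..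
    have "(x*y*z) powr (2*\<alpha>) = (x*y) powr (2*\<alpha>) * z powr (2*\<alpha>)"
      using x y zp by (simp add: powr_mult)
    moreover have "z powr (2*\<alpha>+1) = z powr (2*\<alpha>) * z" using zp by (simp add: powr_add)
    moreover have "fz z = z * P z powr \<beta>" using Pp by (simp add: fz_def)
    moreover have "z powr (2*\<alpha>) > 0" using zp by simp
    moreover have "(x*y) powr (2*\<alpha>) > 0" using x y by simp
    ultimately show ?thesis unfolding k K_def by (rule alg1)
  qed
  have "K * (c * Beta (\<alpha>+1/2) (\<alpha>+1/2)) = BK_const \<alpha> * 4 powr (2*\<alpha>) / 2 * Beta (\<alpha>+1/2) (\<alpha>+1/2)"
  proof -
    have "D powr (2*\<beta>) * D = D powr (2*\<beta>) * D powr 1" using D0 by simp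
    also have "\<dots> = D powr (2*\<beta> + 1)" by (rule powr_add[symmetric])
    also have "2*\<beta> + 1 = 2*\<alpha>" by (simp add: \<beta>_def)
    finally have h1: "D powr (2*\<beta>) * D = D powr (2*\<alpha>)" .
    have h2: "D powr (2*\<alpha>) = 4 powr (2*\<alpha>) * (x*y) powr (2*\<alpha>)"
      unfolding D_def using x y by (simp add: powr_mult)
    have h3: "(x*y) powr (2*\<alpha>) > 0" using x y by simp
    have "K * (c * Beta (\<alpha>+1/2) (\<alpha>+1/2)) = BK_const \<alpha> / (x*y) powr (2*\<alpha>) * ((D powr (2*\<beta>) * D) / 2 * Beta (\<alpha>+1/2) (\<alpha>+1/2))"
      unfolding K_def c_def by (simp add: ac_simps)
    also have "\<dots> = BK_const \<alpha> * 4 powr (2*\<alpha>) / 2 * Beta (\<alpha>+1/2) (\<alpha>+1/2)"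
      unfolding h1 h2 using h3 by simp
    finally show ?thesis .
  qed
  also have "\<dots> = 1" by (rule const_one[OF al])
  finally have KI1: "((\<lambda>z. K * fz z) has_integral 1) {a..b}" using KI by simp
  have "((\<lambda>z. BK_kernel \<alpha> x y z * z powr (2*\<alpha> + 1)) has_integral 1) {a..b}"
    by (rule has_integral_spike_finite[where S="{a,b}", OF _ _ KI1]) (use eqz in auto)
  thus ?thesis by (simp add: a_def b_def)
qed


lemma abs_to_lborel:
  fixes f :: "real \<Rightarrow> real"
  assumes "f absolutely_integrable_on S" "(\<lambda>x. indicator S x *\<^sub>R f x) \<in> borel_measurable lborel"
  shows "set_integrable lborel S f"
  using assms integrable_completion[OF assms(2)] unfolding absolutely_integrable_on_def set_integrable_def
  by simp

lemma BK_const_nonneg: "\<alpha> \<ge> 1/2 \<Longrightarrow> BK_const \<alpha> \<ge> 0"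
  unfolding BK_const_def by (intro divide_nonneg_pos mult_pos_pos) auto

lemma kernel_set_integral:
  fixes \<alpha> x y :: real and F :: "real \<Rightarrow> real"
  assumes al: "\<alpha> \<ge> 1/2" and x: "x > 0" and y: "y > 0"
    and F: "\<And>z. z \<in> {\<bar>x - y\<bar>..x + y} \<Longrightarrow> F z = 1"
  shows "set_lebesgue_integral lborel {\<bar>x - y\<bar>..x + y}
             (\<lambda>z. BK_kernel \<alpha> x y z * F z * z powr (2*\<alpha> + 1)) = 1"
proof -
  let ?f = "\<lambda>z. BK_kernel \<alpha> x y z * z powr (2*\<alpha> + 1)"
  have hi: "(?f has_integral 1) {\<bar>x - y\<bar>..x + y}" by (rule kernel_has_integral[OF al x y])
  have nn: "0 \<le> ?f z" for z
    unfolding BK_kernel_def using BK_const_nonneg[OF al] by simp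
  have ai: "?f absolutely_integrable_on {\<bar>x - y\<bar>..x + y}"
    by (rule nonnegative_absolutely_integrable_1) (use hi nn in auto)
  have meas: "(\<lambda>z. indicator {\<bar>x - y\<bar>..x + y} z *\<^sub>R ?f z) \<in> borel_measurable lborel"
    unfolding BK_kernel_def by measurable
  have "set_lebesgue_integral lborel {\<bar>x - y\<bar>..x + y} ?f = integral {\<bar>x - y\<bar>..x + y} ?f"
    by (rule set_borel_integral_eq_integral(2)[OF abs_to_lborel[OF ai meas]])
  also have "\<dots> = 1" using hi by (rule integral_unique)
  finally have "set_lebesgue_integral lborel {\<bar>x - y\<bar>..x + y} ?f = 1" .
  moreover have "set_lebesgue_integral lborel {\<bar>x - y\<bar>..x + y}
             (\<lambda>z. BK_kernel \<alpha> x y z * F z * z powr (2*\<alpha> + 1))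
      = set_lebesgue_integral lborel {\<bar>x - y\<bar>..x + y} ?f"
    by (rule set_lebesgue_integral_cong) (use F in auto)
  ultimately show ?thesis by simp
qed

lemma omega1_pos: assumes "\<alpha> \<ge> 1/2" shows "BK_omega1 \<alpha> = 1 / (2*\<alpha> + 2)"
proof -
  let ?f = "\<lambda>y::real. y powr (2*\<alpha> + 1)"
  have h: "(?f has_integral (1 powr (2*\<alpha> + 1 + 1) / (2*\<alpha> + 1 + 1))) {0..1}"
    by (rule has_integral_powr_from_0) (use assms in auto)
  have h2: "(?f has_integral 1 / (2*\<alpha> + 2)) {0..1}" using h by (simp add: add.assoc)
  have "(?f has_integral 1 / (2*\<alpha> + 2)) {0..<1}"
  proof (subst has_integral_spike_set_eq[of "{0..<1}" "{0..1}"])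
    have "{x \<in> {0..<1} - {0..1}. ?f x \<noteq> 0} = {}" by auto
    thus "negligible {x \<in> {0..<1} - {0..1}. ?f x \<noteq> 0}" by (simp only: negligible_empty)
    have "{x \<in> {0..1} - {0..<1}. ?f x \<noteq> 0} \<subseteq> {1::real}" by auto
    thus "negligible {x \<in> {0..1} - {0..<1}. ?f x \<noteq> 0}" by (rule negligible_subset[rotated]) simp
  qed (rule h2)
  moreover have ai: "?f absolutely_integrable_on {0..<1}"
    by (rule nonnegative_absolutely_integrable_1) (use calculation in auto)
  moreover have meas: "(\<lambda>z. indicator {0..<1} z *\<^sub>R ?f z) \<in> borel_measurable lborel"
    by measurable
  ultimately show ?thesis unfolding BK_omega1_def
    using set_borel_integral_eq_integral(2)[OF abs_to_lborel[OF ai meas]] integral_unique by metis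
qed

theorem mainTheorem11:
  fixes \<alpha> :: real and n :: nat and x :: real
  assumes "\<alpha> \<ge> 1/2" and "n \<ge> 1" and "real n - 1 \<le> x" and "x < real n"
  shows "BK_g \<alpha> n x = 1"
proof -
  define F :: "real \<Rightarrow> real" where "F = (if n = 1 then indicator {0..2} else indicator {real n - 2..real n + 1})"
  define w where "w = BK_omega1 \<alpha>"
  have w: "w > 0" unfolding w_def omega1_pos[OF assms(1)] using assms(1) by simp
  have x0: "x \<ge> 0" using assms by simp
  have Fz: "F z = 1" if "x - 1 < z" "z < x + 1" "z \<ge> 0" for z
  proof (cases "n = 1")
    case True thus ?thesis using that assms by (simp add: F_def indicator_def)
  next
    case False thus ?thesis using that assms by (simp add: F_def indicator_def)
  qed
  have T: "BK_transl \<alpha> x F y = 1" if y: "y \<in> {0..<1}" for y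
  proof -
    consider "x = 0" | "x \<noteq> 0" "y = 0" | "x > 0" "y > 0" using x0 y by force
    thus ?thesis
    proof cases
      case 1 thus ?thesis using y Fz[of y] by (simp add: BK_transl_def)
    next
      case 2 thus ?thesis using y Fz[of x] x0 by (simp add: BK_transl_def)
    next
      case 3
      have "set_lebesgue_integral lborel {\<bar>x - y\<bar>..x + y}
             (\<lambda>z. BK_kernel \<alpha> x y z * F z * z powr (2*\<alpha> + 1)) = 1"
        by (rule kernel_set_integral[OF assms(1) 3]) (use y in \<open>auto intro!: Fz\<close>)
      thus ?thesis using 3 by (simp add: BK_transl_def)
    qed
  qed
  have "BK_g \<alpha> n x = set_lebesgue_integral lborel {0..}
          (\<lambda>y. indicator {0..<1} y / w * BK_transl \<alpha> x F y * y powr (2*\<alpha> + 1))"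
    unfolding BK_g_def BK_conv_def F_def w_def ..
  also have "\<dots> = set_lebesgue_integral lborel {0..} (\<lambda>y. indicator {0..<1} y * (y powr (2*\<alpha> + 1) / w))"
    by (rule set_lebesgue_integral_cong) (auto simp: T indicator_def)
  also have "\<dots> = set_lebesgue_integral lborel {0..<1} (\<lambda>y. y powr (2*\<alpha> + 1) / w)"
    unfolding set_lebesgue_integral_def by (rule Bochner_Integration.integral_cong) (auto simp: indicator_def)
  also have "\<dots> = set_lebesgue_integral lborel {0..<1} (\<lambda>y. y powr (2*\<alpha> + 1)) / w"
    unfolding set_lebesgue_integral_def by (simp add: integral_divide_zero)
  also have "\<dots> = 1" using w unfolding w_def BK_omega1_def by simp
  finally show ?thesis .
qed
end
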